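(* Let $W$ be an admissible sequence of vertices and $I$ an admissible sequence of indices with $0\le|W|=|I|\le|V|-2$, let $Z$ be a complex $|E|\times\frac{k(k+1)}2$ matrix, and let $\epsilon>0$ and $0\le\theta<2\pi/3$ be reals with $\epsilon<\cos(\theta/2)$. Suppose that for any two vertices $u,v\in V$ and any $i,j\in\{1,\dots,k\}$ such that $(W,u,v)$ and $(I,i,j)$ are admissible, we have $\mathcal{Q}^{(W,u,v)}_{(I,i,j)}(Z)\ne0$, $\mathcal{Q}^{(W,u,v)}_{(I,j,i)}(Z)\ne0$ and $$\left|\frac{\mathcal{Q}^{(W,u,v)}_{(I,i,j)}(Z)}{\mathcal{Q}^{(W,u,v)}_{(I,j,i)}(Z)}-1\right|\le\epsilon.$$ (1) Suppose in addition that for any $u,v\in V$ and any $i,j_1,j_2\in\{1,\dots,k\}$ such that $(W,u,v)$, $(I,i,j_1)$, $(I,i,j_2)$ are admissible, the angle between $\mathcal{Q}^{(W,u,v)}_{(I,i,j_1)}(Z)$ and $\mathcal{Q}^{(W,u,v)}_{(I,i,j_2)}(Z)$ does not exceed $\theta$. Then for any $u,v\in V$ and any $i$ such that $(W,u)$, $(W,v)$, $(I,i)$ are admissible, we have $\mathcal{Q}^{(W,u)}_{(I,i)}(Z)\ne0$, $\mathcal{Q}^{(W,v)}_{(I,i)}(Z)\ne0$, and the angle between them does not exceed $\arcsin\frac{\epsilon}{\cos(\theta/2)}$. (2) Suppose instead that for any $u,v_1,v_2\in V$ and any $i,j\in\{1,\dots,k\}$ such that $(W,u,v_1)$, $(W,u,v_2)$,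 $(I,i,j)$ are admissible, the angle between $\mathcal{Q}^{(W,u,v_1)}_{(I,i,j)}(Z)$ and $\mathcal{Q}^{(W,u,v_2)}_{(I,i,j)}(Z)$ does not exceed $\theta$. Then for any $u\in V$ and any $i,j$ such that $(W,u)$, $(I,i)$, $(I,j)$ are admissible, we have $\mathcal{Q}^{(W,u)}_{(I,i)}(Z)\ne0$, $\mathcal{Q}^{(W,u)}_{(I,j)}(Z)\ne0$, and the angle between them does not exceed $\arcsin\frac{\epsilon}{\cos(\theta/2)}$.
   Context: Fix a finite simple undirected graph $G=(V,E)$ and positive integers $m=(\mu_1,\dots,\mu_k)$ with $\sum\mu_i=|V|$. A complex $|E|\times\frac{k(k+1)}2$ matrix $Z=(z^{uv}_{ij})$ has entries indexed by edges $\{u,v\}\in E$ and unordered pairs $\{i,j\}$, $1\le i,j\le k$. A sequence $W=(v_1,\dots,v_n)$ of vertices is admissible if the $v_j$ are distinct. For a sequence $I=(i_1,\dots,i_n)$ of indices in $\{1,\dots,k\}$, $\nu_i(I)=|\{j: i_j=i\}|$; $I$ is admissible if $\nu_i(I)\le\mu_i$ for all $i$. For admissible $W=(v_1,\dots,v_n)$, $I=(i_1,\dots,i_n)$ of equal length, $$\mathcal{Q}^W_I(Z)=\sum_{\substack{\phi:V\to\{1,\dots,k\}\\ |\phi^{-1}(i)|=\mu_i\ (i=1,\dots,k)\\ \phi(v_j)=i_j\ (j=1,\dots,n)}}\ \prod_{\{u,v\}\in E} z^{uv}_{\phi(u)\phi(v)}.$$ $(W,v)$ denotes $W$ with vertex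 $v$ appended, $(I,i)$ denotes $I$ with index $i$ appended, and similarly for several elements. Angles are between nonzero complex numbers regarded as vectors in $\mathbb{R}^2\cong\mathbb{C}$. *)

theory Defs
  imports "HOL-Analysis.Analysis" "HOL-Library.FuncSet"
begin

definition simple_graph :: "'a set \<Rightarrow> 'a set set \<Rightarrow> bool" where
  "simple_graph V E \<longleftrightarrow> finite V \<and>
     (\<forall>e\<in>E. \<exists>u v. u \<in> V \<and> v \<in> V \<and> u \<noteq> v \<and> e = {u, v})"

definition valid_mults :: "'a set \<Rightarrow> nat \<Rightarrow> (nat \<Rightarrow> nat) \<Rightarrow> bool" where
  "valid_mults V k mu \<longleftrightarrow> (\<forall>i\<in>{1..k}. mu i > 0) \<and> (\<Sum>i=1..k. mu i) = card V"

definition adm_vertices :: "'a set \<Rightarrow> 'a list \<Rightarrow> bool" where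
  "adm_vertices V W \<longleftrightarrow> distinct W \<and> set W \<subseteq> V"

definition nu :: "nat \<Rightarrow> nat list \<Rightarrow> nat" where
  "nu i I = length (filter (\<lambda>x. x = i) I)"

definition adm_indices :: "nat \<Rightarrow> (nat \<Rightarrow> nat) \<Rightarrow> nat list \<Rightarrow> bool" where
  "adm_indices k mu I \<longleftrightarrow> set I \<subseteq> {1..k} \<and> (\<forall>i\<in>{1..k}. nu i I \<le> mu i)"

text \<open>Matrix Z: entries indexed by an edge (2-set of vertices) and an unordered
  pair of indices (a set {i,j}, possibly a singleton when i = j).\<close>
definition Qpoly :: "'a set \<Rightarrow> 'a set set \<Rightarrow> nat \<Rightarrow> (nat \<Rightarrow> nat) \<Rightarrow>
    ('a set \<Rightarrow> nat set \<Rightarrow> complex) \<Rightarrow> 'a list \<Rightarrow> nat list \<Rightarrow> complex" where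
  "Qpoly V E k mu Z W I =
     (\<Sum>\<phi> \<in> {\<phi>. \<phi> \<in> V \<rightarrow>\<^sub>E {1..k} \<and> (\<forall>i\<in>{1..k}. card {v\<in>V. \<phi> v = i} = mu i)
                \<and> (\<forall>j<length W. \<phi> (W ! j) = I ! j)}.
        \<Prod>e\<in>E. Z e (\<phi> ` e))"

definition cangle :: "complex \<Rightarrow> complex \<Rightarrow> real" where
  "cangle a b = arccos ((a \<bullet> b) / (cmod a * cmod b))"

end

theory Submission
  imports Defs
begin





lemma twoD:
  fixes a b c y :: real
  assumes h1: "a^2+b^2=1" and h2: "c^2+y^2=1" and h3: "a \<ge> c" and h4: "a*c+b*y \<ge> c" and h5: "c > -1/2"
  shows "a + (a*c+b*y) \<ge> 1+c"
proof -
  define s where "s = a*c+b*y"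
  have g0: "(s - a*c)^2 = b^2*y^2" unfolding s_def by (simp add: power2_eq_square algebra_simps)
  have "b^2 = 1-a^2" "y^2 = 1-c^2" using h1 h2 by auto
  then have gram: "(s - a*c)^2 = (1-a^2)*(1-c^2)" using g0 by simp
  have c1: "c \<le> 1" proof -
    have "c^2 \<le> 1" using h2 by (metis le_add_same_cancel1 zero_le_power2)
    then have "\<bar>c\<bar> \<le> 1" by (simp add: abs_square_le_1) then show ?thesis by simp
  qed
  show ?thesis
  proof (rule ccontr)
    assume nc: "\<not> ?thesis"
    define t where "t = a + s"
    define d where "d = a - s"
    have tl: "t < 1 + c" using nc unfolding t_def s_def by simp
    have key: "(1-c)*t^2 + (1+c)*d^2 = 2*(1-c^2)"
      using gram unfolding t_def d_def by (simp add: power2_eq_square algebra_simps)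
    have cl: "c < 1"
    proof (rule ccontr)
      assume "\<not> c < 1" then have "c = 1" using c1 by simp
      then show False using h3 h4 tl unfolding t_def s_def by simp
    qed
    have t2: "t \<ge> 2*c" using h3 h4 unfolding t_def s_def by simp
    have dd: "d^2 \<le> (t - 2*c)^2"
    proof -
      have "\<bar>d\<bar> \<le> t - 2*c" using h3 h4 unfolding t_def d_def s_def by simp
      then show ?thesis by (metis abs_ge_zero power2_abs power_mono)
    qed
    have f: "2*t^2 - 4*c*(1+c)*t + 4*c^2*(1+c) - 2 + 2*c^2 \<ge> 0"
    proof -
      have "(1+c)*d^2 \<le> (1+c)*(t - 2*c)^2" using dd h5 by (intro mult_left_mono) auto
      then show ?thesis using key by (simp add: power2_eq_square algebra_simps)
    qed
    have fact: "2*t^2 - 4*c*(1+c)*t + 4*c^2*(1+c) - 2 + 2*c^2 = 2*(t - (1+c))*(t - (1+c)*(2*c-1))"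
      by (simp add: power2_eq_square algebra_simps)
    have p1: "t - (1+c) < 0" using tl by simp
    have p2: "t - (1+c)*(2*c-1) > 0"
    proof -
      have "(1-c)*(1+2*c) > 0" using cl h5 by simp
      then show ?thesis using t2 by (simp add: algebra_simps) 
    qed
    have "2*(t - (1+c))*(t - (1+c)*(2*c-1)) < 0" using p1 p2 by (simp add: mult_neg_pos)
    then show False using f fact by simp
  qed
qed

lemma twoDc:
  fixes U V X :: complex
  assumes "cmod U = 1" "cmod V = 1" "cmod X = 1" "X \<bullet> U \<ge> c" "X \<bullet> V \<ge> c" "U \<bullet> V = c" "c > -1/2"
  shows "X \<bullet> (U + V) \<ge> 1 + c"
proof -
  define X' where "X' = X * cnj U"
  define V' where "V' = V * cnj U"
  have u2: "Re U ^ 2 + Im U ^ 2 = 1" using assms(1) by (metis cmod_power2 power_one)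
  have e1: "Re X' = X \<bullet> U" unfolding X'_def inner_complex_def by simp
  have e2: "Re V' = c" using assms(6) unfolding V'_def inner_complex_def by (simp add: algebra_simps)
  have e3: "Re X' * Re V' + Im X' * Im V' = X \<bullet> V"
  proof -
    have "Re X' * Re V' + Im X' * Im V' = (Re X * Re V + Im X * Im V) * (Re U ^ 2 + Im U ^ 2)"
      unfolding X'_def V'_def by (simp add: power2_eq_square algebra_simps)
    then show ?thesis using u2 unfolding inner_complex_def by simp
  qed
  have n1: "Re X' ^ 2 + Im X' ^ 2 = 1"
  proof -
    have "cmod X' = 1" unfolding X'_def using assms by (simp add: norm_mult)
    then show ?thesis by (metis cmod_power2 power_one)
  qed
  have n2: "Re V' ^ 2 + Im V' ^ 2 = 1"
  proof -
    have "cmod V' = 1" unfolding V'_def using assms by (simp add: norm_mult)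
    then show ?thesis by (metis cmod_power2 power_one)
  qed
  have "Re X' + (Re X' * Re V' + Im X' * Im V') \<ge> 1 + Re V'"
    apply (rule twoD[OF n1 n2]) using e1 e2 e3 assms by auto
  then show ?thesis using e1 e2 e3 by (simp add: inner_add_right)
qed

lemma dot_bounds:
  fixes a b :: complex
  assumes "a \<noteq> 0" "b \<noteq> 0"
  shows "-1 \<le> (a \<bullet> b) / (cmod a * cmod b)" "(a \<bullet> b) / (cmod a * cmod b) \<le> 1"
proof -
  have p: "cmod a * cmod b > 0" using assms by simp
  have "\<bar>a \<bullet> b\<bar> \<le> cmod a * cmod b" by (rule Cauchy_Schwarz_ineq2)
  then show "-1 \<le> (a \<bullet> b) / (cmod a * cmod b)" "(a \<bullet> b) / (cmod a * cmod b) \<le> 1"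
    using p by (auto simp: divide_simps abs_le_iff)
qed

lemma cangle_le_imp:
  fixes a b :: complex
  assumes "a \<noteq> 0" "b \<noteq> 0" "cangle a b \<le> \<theta>" "\<theta> \<le> pi"
  shows "(a \<bullet> b) / (cmod a * cmod b) \<ge> cos \<theta>"
proof -
  define g where "g = (a \<bullet> b) / (cmod a * cmod b)"
  have g: "-1 \<le> g" "g \<le> 1" using dot_bounds[OF assms(1,2)] unfolding g_def by auto
  have "cos \<theta> \<le> cos (arccos g)"
    apply (rule cos_monotone_0_pi_le) using arccos_lbound[OF g] assms(3,4) unfolding cangle_def g_def by auto
  then show ?thesis using g unfolding g_def by simp
qed


lemma angle_small:
  fixes A B :: complex
  assumes A: "A \<noteq> 0" and D: "cmod (B - A) \<le> r * cmod A" and r: "0 \<le> r" "r < 1"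
  shows "B \<noteq> 0 \<and> cangle A B \<le> arcsin r"
proof -
  define Dv where "Dv = B - A"
  have BD: "B = A + Dv" unfolding Dv_def by simp
  define n where "n = A \<bullet> A"
  define t where "t = A \<bullet> Dv"
  define d where "d = Dv \<bullet> Dv"
  have nA: "n = cmod A ^ 2" unfolding n_def by (simp add: power2_norm_eq_inner)
  have dD: "d = cmod Dv ^ 2" unfolding d_def by (simp add: power2_norm_eq_inner)
  have npos: "n > 0" using A nA by simp
  have dle: "d \<le> r^2 * n"
  proof -
    have "cmod Dv ^ 2 \<le> (r * cmod A)^2" using D unfolding Dv_def by (intro power_mono) auto
    then show ?thesis using nA dD by (simp add: power_mult_distrib)
  qed
  have cs: "t^2 \<le> n * d"
  proof -
    have "\<bar>t\<bar> \<le> cmod A * cmod Dv" unfolding t_def by (rule Cauchy_Schwarz_ineq2)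
    then have "\<bar>t\<bar>^2 \<le> (cmod A * cmod Dv)^2" by (intro power_mono) auto
    then show ?thesis using nA dD by (simp add: power_mult_distrib)
  qed
  have AB: "A \<bullet> B = n + t" unfolding BD n_def t_def by (simp add: inner_add_right)
  have BB: "cmod B ^ 2 = n + 2*t + d" unfolding BD n_def t_def d_def power2_norm_eq_inner
    by (simp add: inner_add_left inner_add_right inner_commute)
  have tlow: "t \<ge> - (r * n)"
  proof -
    have "n*d \<le> n*(r^2*n)" using dle npos by (intro mult_left_mono) auto
    moreover have "(r*n)^2 = n*(r^2*n)" by (simp add: power2_eq_square algebra_simps)
    ultimately have "t^2 \<le> (r*n)^2" using cs by linarith
    then have "\<bar>t\<bar> \<le> \<bar>r*n\<bar>" using abs_le_square_iff by blast
    then show ?thesis using r npos by auto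
  qed
  have pos: "n + t > 0"
  proof -
    have "r * n < n" using r npos by simp
    then show ?thesis using tlow by simp
  qed
  have key: "(n+t)^2 - (1 - r^2) * n * (n + 2*t + d) \<ge> 0"
  proof -
    have e: "(n+t)^2 - (1 - r^2) * n * (n + 2*t + d) = r^2*(n+t)^2 - (1 - r^2)*(n*d - t^2)"
      by (simp add: power2_eq_square algebra_simps)
    have "(1 - r^2)*(n*d - t^2) \<le> (1 - r^2)*(r^2*n^2 - t^2)"
    proof (rule mult_left_mono)
      have "n * d \<le> n * (r^2 * n)" using dle npos by (intro mult_left_mono) auto
      then show "n * d - t\<^sup>2 \<le> r\<^sup>2 * n\<^sup>2 - t\<^sup>2" by (simp add: power2_eq_square algebra_simps)
      show "0 \<le> 1 - r^2" using r by (simp add: power_le_one)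
    qed
    moreover have "r^2*(n+t)^2 - (1 - r^2)*(r^2*n^2 - t^2) = (t + r^2*n)^2"
      by (simp add: power2_eq_square algebra_simps)
    ultimately show ?thesis using e by (smt (verit) zero_le_power2)
  qed
  have Bnz: "B \<noteq> 0"
  proof
    assume "B = 0"
    then have "n + t = 0" using AB by simp
    then show False using pos by simp
  qed
  define x where "x = (A \<bullet> B) / (cmod A * cmod B)"
  have x: "-1 \<le> x" "x \<le> 1" using dot_bounds[OF A Bnz] unfolding x_def by auto
  have xpos: "x \<ge> 0" unfolding x_def AB using pos by simp
  have x2: "x^2 \<ge> 1 - r^2"
  proof -
    have p: "(cmod A * cmod B)^2 > 0" using A Bnz by simp
    have "x^2 = (n+t)^2 / (n * (n + 2*t + d))" unfolding x_def AB
      by (simp add: power_divide power_mult_distrib nA BB)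
    moreover have "n * (n + 2*t + d) > 0" using p by (simp add: power_mult_distrib nA BB)
    moreover have "(1 - r^2) * (n * (n + 2*t + d)) \<le> (n+t)^2" using key by (simp add: mult.assoc)
    ultimately show ?thesis by (simp add: pos_le_divide_eq)
  qed
  have sq: "sqrt (1 - r^2) \<le> x" using x2 xpos by (simp add: real_le_lsqrt)
  have r1: "-1 \<le> r" "r \<le> 1" using r by auto
  have as: "0 \<le> arcsin r" "arcsin r \<le> pi" using arcsin_bounded[OF r1] arcsin_nonneg[of r] r by auto
  have "cangle A B = arccos x" unfolding cangle_def x_def by simp
  also have "\<dots> \<le> arccos (sqrt (1 - r^2))"
  proof (rule arccos_le_arccos)
    have "r^2 \<le> 1" using r by (simp add: power_le_one)
    then have "0 \<le> sqrt (1 - r^2)" by simp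
    then show "-1 \<le> sqrt (1 - r^2)" by linarith
  qed (use sq x in auto)
  also have "\<dots> = arccos (cos (arcsin r))" using cos_arcsin[OF r1] by simp
  also have "\<dots> = arcsin r" using arccos_cos[OF as] .
  finally show ?thesis using Bnz by simp
qed


lemma cone:
  fixes a :: "'j \<Rightarrow> complex"
  assumes fin: "finite J" and ne: "J \<noteq> {}" and nz: "\<forall>j\<in>J. a j \<noteq> 0"
    and ang: "\<forall>p\<in>J. \<forall>q\<in>J. cangle (a p) (a q) \<le> \<theta>"
    and th: "0 \<le> \<theta>" "\<theta> < 2*pi/3"
  shows "cos (\<theta>/2) * (\<Sum>j\<in>J. cmod (a j)) \<le> cmod (sum a J)"
proof -
  define e where "e j = (1 / cmod (a j)) *\<^sub>R a j" for j
  have en: "cmod (e j) = 1" if "j \<in> J" for j using nz that unfolding e_def by simp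
  have ae: "a j = cmod (a j) *\<^sub>R e j" if "j \<in> J" for j using nz that unfolding e_def by simp
  have thpi: "\<theta> \<le> pi" using th by simp
  have ge: "e p \<bullet> e q \<ge> cos \<theta>" if "p \<in> J" "q \<in> J" for p q
  proof -
    have "(a p \<bullet> a q) / (cmod (a p) * cmod (a q)) \<ge> cos \<theta>"
      using cangle_le_imp[of "a p" "a q" \<theta>] nz ang that thpi by auto
    moreover have "(a p \<bullet> a q) / (cmod (a p) * cmod (a q)) = e p \<bullet> e q"
      unfolding e_def by (simp add: inner_scaleR_left inner_scaleR_right)
    ultimately show ?thesis by simp
  qed
  define G where "G = (\<lambda>(p,q). e p \<bullet> e q) ` (J \<times> J)"
  have finG: "finite G" "G \<noteq> {}" unfolding G_def using fin ne by auto
  define c where "c = Min G"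
  obtain p q where pq: "p \<in> J" "q \<in> J" "e p \<bullet> e q = c"
    using Min_in[OF finG] unfolding c_def G_def by auto
  have cmin: "c \<le> e j \<bullet> e l" if "j \<in> J" "l \<in> J" for j l
    unfolding c_def using finG(1) that by (intro Min_le) (auto simp: G_def)
  have ccos: "c \<ge> cos \<theta>" using ge pq by auto
  have cth: "cos \<theta> > -1/2"
  proof -
    have "cos (2*pi/3) < cos \<theta>" by (rule cos_monotone_0_pi) (use th in auto)
    then show ?thesis by (simp add: cos_120)
  qed
  have c12: "c > -1/2" using ccos cth by simp
  define w where "w = e p + e q"
  have ew: "e j \<bullet> w \<ge> 1 + c" if "j \<in> J" for j
    unfolding w_def
  proof (rule twoDc)
    show "cmod (e p) = 1" "cmod (e q) = 1" "cmod (e j) = 1" using en pq that by auto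
    show "c \<le> e j \<bullet> e p" "c \<le> e j \<bullet> e q" using cmin pq that by auto
  qed (use pq c12 in auto)
  define S where "S = (\<Sum>j\<in>J. cmod (a j))"
  define X where "X = sum a J"
  have S0: "S \<ge> 0" unfolding S_def by (simp add: sum_nonneg)
  have Xw: "X \<bullet> w \<ge> (1 + c) * S"
  proof -
    have "X \<bullet> w = (\<Sum>j\<in>J. cmod (a j) * (e j \<bullet> w))"
      unfolding X_def inner_sum_left
    proof (rule sum.cong)
      fix x assume "x \<in> J"
      then have "a x \<bullet> w = (cmod (a x) *\<^sub>R e x) \<bullet> w" using ae by metis
      then show "a x \<bullet> w = cmod (a x) * (e x \<bullet> w)" by (simp add: inner_scaleR_left)
    qed simp
    also have "\<dots> \<ge> (\<Sum>j\<in>J. cmod (a j) * (1 + c))"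
      by (rule sum_mono) (simp add: ew mult_left_mono)
    finally show ?thesis unfolding S_def by (simp add: sum_distrib_left mult.commute)
  qed
  have ww: "cmod w ^ 2 = 2 + 2 * c"
  proof -
    have "e p \<bullet> e p = 1" "e q \<bullet> e q = 1" using en pq by (simp_all add: power2_norm_eq_inner[symmetric])
    moreover have "e q \<bullet> e p = c" using pq by (simp add: inner_commute)
    ultimately show ?thesis unfolding w_def power2_norm_eq_inner using pq
      by (simp add: inner_add_left inner_add_right)
  qed
  have c1: "1 + c > 0" using c12 by simp
  have "(1 + c) * S \<le> cmod X * cmod w"
    using Xw Cauchy_Schwarz_ineq2[of X w] by simp
  then have "((1 + c) * S)^2 \<le> (cmod X * cmod w)^2"
    using c1 S0 by (intro power_mono) auto
  then have "(1+c) * ((1 + c) * S^2) \<le> (1+c) * (2 * cmod X ^ 2)"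
    using ww by (simp add: power_mult_distrib power2_eq_square algebra_simps)
  then have h: "(1 + c) * S^2 \<le> 2 * cmod X ^ 2" using c1 by simp
  have cc: "2 * cos (\<theta>/2) ^ 2 = 1 + cos \<theta>" using cos_double_cos[of "\<theta>/2"] by simp
  have "(cos (\<theta>/2) * S)^2 \<le> cmod X ^ 2"
  proof -
    have "2 * (cos (\<theta>/2) * S)^2 = (1 + cos \<theta>) * S^2" using cc by (simp add: power_mult_distrib)
    also have "\<dots> \<le> (1 + c) * S^2" using ccos by (intro mult_right_mono) auto
    finally show ?thesis using h by simp
  qed
  then show ?thesis unfolding S_def X_def by (rule power2_le_imp_le) simp
qed

lemma core:
  fixes a b :: "'j \<Rightarrow> complex"
  assumes fin: "finite J" and ne: "J \<noteq> {}" and nz: "\<forall>j\<in>J. a j \<noteq> 0"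
    and ab: "\<forall>j\<in>J. cmod (b j - a j) \<le> \<epsilon> * cmod (a j)"
    and ang: "\<forall>p\<in>J. \<forall>q\<in>J. cangle (a p) (a q) \<le> \<theta>"
    and th: "0 \<le> \<theta>" "\<theta> < 2*pi/3" and eps: "0 < \<epsilon>" "\<epsilon> < cos (\<theta>/2)"
  shows "sum a J \<noteq> 0 \<and> sum b J \<noteq> 0 \<and> cangle (sum a J) (sum b J) \<le> arcsin (\<epsilon> / cos (\<theta>/2))"
proof -
  define K where "K = cos (\<theta>/2)"
  define S where "S = (\<Sum>j\<in>J. cmod (a j))"
  have K: "K > 0" using eps unfolding K_def by simp
  have Spos: "S > 0" unfolding S_def using fin ne nz by (intro sum_pos) auto
  have cn: "K * S \<le> cmod (sum a J)" unfolding K_def S_def by (rule cone[OF fin ne nz ang th])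
  have Anz: "sum a J \<noteq> 0" using cn K Spos by (smt (verit) mult_pos_pos norm_zero)
  have "cmod (sum b J - sum a J) = cmod (\<Sum>j\<in>J. b j - a j)" by (simp add: sum_subtractf)
  also have "\<dots> \<le> (\<Sum>j\<in>J. cmod (b j - a j))" by (rule norm_sum)
  also have "\<dots> \<le> (\<Sum>j\<in>J. \<epsilon> * cmod (a j))" by (rule sum_mono) (use ab in auto)
  also have "\<dots> = \<epsilon> * S" unfolding S_def by (simp add: sum_distrib_left)
  also have "\<dots> = (\<epsilon> / K) * (K * S)" using K by simp
  also have "\<dots> \<le> (\<epsilon> / K) * cmod (sum a J)" using cn K eps by (intro mult_left_mono) auto
  finally have d: "cmod (sum b J - sum a J) \<le> (\<epsilon> / K) * cmod (sum a J)" .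
  have r: "0 \<le> \<epsilon> / K" "\<epsilon> / K < 1" using K eps unfolding K_def by auto
  show ?thesis using angle_small[OF Anz d r] Anz unfolding K_def by simp
qed



definition Sset :: "'a set \<Rightarrow> nat \<Rightarrow> (nat \<Rightarrow> nat) \<Rightarrow> 'a list \<Rightarrow> nat list \<Rightarrow> ('a \<Rightarrow> nat) set" where
  "Sset V k mu W I = {\<phi>. \<phi> \<in> V \<rightarrow>\<^sub>E {1..k} \<and> (\<forall>i\<in>{1..k}. card {v\<in>V. \<phi> v = i} = mu i)
                \<and> (\<forall>j<length W. \<phi> (W ! j) = I ! j)}"

lemma Qpoly_Sset: "Qpoly V E k mu Z W I = (\<Sum>\<phi>\<in>Sset V k mu W I. \<Prod>e\<in>E. Z e (\<phi> ` e))"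
  by (simp add: Qpoly_def Sset_def)

lemma finite_Sset: "finite V \<Longrightarrow> finite (Sset V k mu W I)"
  by (rule finite_subset[of _ "V \<rightarrow>\<^sub>E {1..k}"]) (auto simp: Sset_def intro: finite_PiE)

lemma idx_append:
  assumes "length W = length I" "length xs = length ys"
  shows "(\<forall>m<length (W@xs). \<phi> ((W@xs)!m) = (I@ys)!m) \<longleftrightarrow>
         (\<forall>m<length W. \<phi> (W!m) = I!m) \<and> (\<forall>m<length xs. \<phi> (xs!m) = ys!m)"
proof safe
  fix m assume h: "\<forall>m<length (W@xs). \<phi> ((W@xs)!m) = (I@ys)!m"
  { assume "m < length W" then show "\<phi> (W!m) = I!m" using h[rule_format, of m] assms by (simp add: nth_append) }
  { assume m: "m < length xs"
    have "length W + m < length (W@xs)" using m by simp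
    then have "\<phi> ((W@xs)!(length W + m)) = (I@ys)!(length W + m)" using h by blast
    then show "\<phi> (xs!m) = ys!m" using assms(1) by (metis nth_append_length_plus) }
next
  fix m assume h1: "\<forall>m<length W. \<phi> (W!m) = I!m" and h2: "\<forall>m<length xs. \<phi> (xs!m) = ys!m"
    and m: "m < length (W@xs)"
  show "\<phi> ((W@xs)!m) = (I@ys)!m"
  proof (cases "m < length W")
    case True then show ?thesis using h1 assms by (simp add: nth_append)
  next
    case False then show ?thesis using h2 m assms by (simp add: nth_append)
  qed
qed

lemma Sset_append1:
  assumes "length W = length I"
  shows "Sset V k mu (W@[v]) (I@[j]) = {\<phi>\<in>Sset V k mu W I. \<phi> v = j}"
  using idx_append[OF assms, of "[v]" "[j]"] unfolding Sset_def by auto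

lemma Sset_append2:
  assumes "length W = length I"
  shows "Sset V k mu (W@[x,y]) (I@[a,b]) = {\<phi>\<in>Sset V k mu W I. \<phi> x = a \<and> \<phi> y = b}"
proof -
  have "\<And>\<phi>. (\<forall>m<length [x,y]. \<phi> ([x,y]!m) = [a,b]!m) \<longleftrightarrow> \<phi> x = a \<and> \<phi> y = b"
    by (auto simp: less_Suc_eq)
  then show ?thesis using idx_append[OF assms, of "[x,y]" "[a,b]"] unfolding Sset_def by auto
qed

lemma Qpoly_swap:
  assumes "length W = length I"
  shows "Qpoly V E k mu Z (W@[x,y]) (I@[a,b]) = Qpoly V E k mu Z (W@[y,x]) (I@[b,a])"
  unfolding Qpoly_Sset Sset_append2[OF assms] by (metis (lifting) conj_commute)

lemma Q_split:
  assumes fin: "finite V" and v: "v \<in> V" and len: "length W = length I"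
  shows "Qpoly V E k mu Z W I = (\<Sum>j\<in>{1..k}. Qpoly V E k mu Z (W@[v]) (I@[j]))"
proof -
  have "(\<Sum>j\<in>{1..k}. Qpoly V E k mu Z (W@[v]) (I@[j])) =
        (\<Sum>j\<in>{1..k}. \<Sum>\<phi>\<in>{\<phi>. \<phi> \<in> Sset V k mu W I \<and> \<phi> v = j}. \<Prod>e\<in>E. Z e (\<phi> ` e))"
    unfolding Qpoly_Sset Sset_append1[OF len] by simp
  also have "\<dots> = (\<Sum>\<phi>\<in>Sset V k mu W I. \<Prod>e\<in>E. Z e (\<phi> ` e))"
  proof (rule sum.group)
    show "finite (Sset V k mu W I)" using fin by (rule finite_Sset)
    show "(\<lambda>\<phi>. \<phi> v) ` Sset V k mu W I \<subseteq> {1..k}" using v by (auto simp: Sset_def)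
  qed simp
  finally show ?thesis unfolding Qpoly_Sset by simp
qed

lemma count_idx:
  assumes d: "distinct W" and len: "length W = length I" and h: "\<forall>m<length W. \<phi> (W!m) = I!m"
  shows "card {v\<in>set W. \<phi> v = j} = nu j I"
proof -
  have "{v\<in>set W. \<phi> v = j} = (\<lambda>m. W!m) ` {m. m < length I \<and> I!m = j}"
    using h len by (auto simp: in_set_conv_nth image_iff)
  moreover have "inj_on (\<lambda>m. W!m) {m. m < length I \<and> I!m = j}"
    using d len by (auto simp: inj_on_def nth_eq_iff_index_eq)
  ultimately show ?thesis unfolding nu_def length_filter_conv_card by (simp add: card_image)
qed

lemma S_adm:
  assumes fin: "finite V" and W: "adm_vertices V W" and len: "length W = length I"
    and phi: "\<phi> \<in> Sset V k mu W I"
  shows "adm_indices k mu I"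
proof -
  have pi: "\<phi> \<in> V \<rightarrow>\<^sub>E {1..k}" and cd: "\<forall>i\<in>{1..k}. card {v\<in>V. \<phi> v = i} = mu i"
    and h: "\<forall>m<length W. \<phi> (W!m) = I!m" using phi unfolding Sset_def by auto
  have sI: "set I \<subseteq> {1..k}"
  proof
    fix x assume "x \<in> set I"
    then obtain m where m: "m < length I" "I!m = x" by (auto simp: in_set_conv_nth)
    then have "W!m \<in> V" using W len unfolding adm_vertices_def by (metis nth_mem subsetD)
    then show "x \<in> {1..k}" using pi h m len by (metis PiE_mem)
  qed
  have "nu i I \<le> mu i" if "i \<in> {1..k}" for i
  proof -
    have "nu i I = card {v\<in>set W. \<phi> v = i}"
      using count_idx[of W I \<phi> i] W len h unfolding adm_vertices_def by simp
    also have "\<dots> \<le> card {v\<in>V. \<phi> v = i}" using W fin unfolding adm_vertices_def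
      by (intro card_mono) auto
    finally show ?thesis using cd that by simp
  qed
  then show ?thesis using sI unfolding adm_indices_def by simp
qed

lemma Q_zero:
  assumes fin: "finite V" and W: "adm_vertices V W" and len: "length W = length I"
    and na: "\<not> adm_indices k mu I"
  shows "Qpoly V E k mu Z W I = 0"
proof -
  have "Sset V k mu W I = {}" using S_adm[OF fin W len] na by blast
  then show ?thesis unfolding Qpoly_Sset by simp
qed

lemma Q_count:
  assumes fin: "finite V" and W: "adm_vertices V W" and len: "length W = length I"
    and that: "j \<in> {1..k}"
  shows "(\<Sum>v\<in>V - set W. Qpoly V E k mu Z (W@[v]) (I@[j])) = of_nat (mu j - nu j I) * Qpoly V E k mu Z W I"
proof -
  let ?S = "Sset V k mu W I"
  let ?f = "\<lambda>\<phi>. \<Prod>e\<in>E. Z e (\<phi> ` e)"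
  have "(\<Sum>v\<in>V - set W. Qpoly V E k mu Z (W@[v]) (I@[j])) =
        (\<Sum>v\<in>V - set W. \<Sum>\<phi>\<in>{\<phi>. \<phi> \<in> ?S \<and> \<phi> v = j}. ?f \<phi>)"
    unfolding Qpoly_Sset Sset_append1[OF len] by simp
  also have "\<dots> = (\<Sum>\<phi>\<in>?S. \<Sum>v\<in>{v. v \<in> V - set W \<and> \<phi> v = j}. ?f \<phi>)"
    by (rule sum.swap_restrict) (use fin in \<open>auto simp: finite_Sset\<close>)
  also have "\<dots> = (\<Sum>\<phi>\<in>?S. of_nat (mu j - nu j I) * ?f \<phi>)"
  proof (rule sum.cong)
    fix \<phi> assume phi: "\<phi> \<in> ?S"
    have cd: "card {v\<in>V. \<phi> v = j} = mu j" and h: "\<forall>m<length W. \<phi> (W!m) = I!m"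
      using phi that unfolding Sset_def by auto
    have c1: "card {v\<in>set W. \<phi> v = j} = nu j I"
      using count_idx[of W I \<phi> j] W len h unfolding adm_vertices_def by simp
    have "{v. v \<in> V - set W \<and> \<phi> v = j} = {v\<in>V. \<phi> v = j} - {v\<in>set W. \<phi> v = j}" by auto
    moreover have "{v\<in>set W. \<phi> v = j} \<subseteq> {v\<in>V. \<phi> v = j}" using W unfolding adm_vertices_def by auto
    ultimately have "card {v. v \<in> V - set W \<and> \<phi> v = j} = mu j - nu j I"
      using fin cd c1 by (simp add: card_Diff_subset finite_subset)
    then show "(\<Sum>v\<in>{v. v \<in> V - set W \<and> \<phi> v = j}. ?f \<phi>) = of_nat (mu j - nu j I) * ?f \<phi>" by simp
  qed simp
  finally show ?thesis unfolding Qpoly_Sset by (simp add: sum_distrib_left)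
qed

lemma nu_append: "nu l (xs@ys) = nu l xs + nu l ys"
  by (simp add: nu_def)

lemma nu_single: "nu l [x] = (if x = l then 1 else 0)"
  by (simp add: nu_def)

lemma sum_nu: "set xs \<subseteq> {1..k} \<Longrightarrow> (\<Sum>l=1..k. nu l xs) = length xs"
proof (induction xs)
  case Nil then show ?case by (simp add: nu_def)
next
  case (Cons x xs)
  have "(\<Sum>l=1..k. nu l (x#xs)) = (\<Sum>l=1..k. (if x = l then 1 else 0) + nu l xs)"
    by (rule sum.cong) (auto simp: nu_def)
  also have "\<dots> = (\<Sum>l=1..k. (if x = l then 1 else 0)) + (\<Sum>l=1..k. nu l xs)"
    by (simp add: sum.distrib)
  also have "(\<Sum>l=1..k. (if x = l then 1::nat else 0)) = 1" using Cons.prems by (simp add: sum.delta)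
  finally show ?case using Cons by simp
qed

lemma adm_swap: "adm_indices k mu (I@[i,j]) \<longleftrightarrow> adm_indices k mu (I@[j,i])"
  unfolding adm_indices_def nu_def by auto

lemma adm_pair:
  assumes "i \<noteq> j" "adm_indices k mu (I@[i])" "adm_indices k mu (I@[j])"
  shows "adm_indices k mu (I@[i,j])"
proof -
  have e: "I@[i,j] = (I@[i])@[j]" by simp
  have n: "\<forall>l\<in>{1..k}. nu l (I@[i,j]) \<le> mu l"
  proof (intro ballI)
    fix l assume that: "l \<in> {1..k}"
    have a: "nu l I + (if i = l then 1 else 0) \<le> mu l" "nu l I + (if j = l then 1 else 0) \<le> mu l"
      using assms that unfolding adm_indices_def by (auto simp: nu_append nu_single)
    have "nu l (I@[i,j]) = nu l I + (if i = l then 1 else 0) + (if j = l then 1 else 0)"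
      by (simp add: nu_def)
    then show "nu l (I@[i,j]) \<le> mu l" using a assms(1) by (auto split: if_splits)
  qed
  have s: "set (I@[i,j]) \<subseteq> {1..k}" using assms(2,3) unfolding adm_indices_def by simp
  show ?thesis using s n unfolding adm_indices_def by (rule conjI)
qed

lemma adm_ext:
  assumes M: "valid_mults V k mu" and A: "adm_indices k mu (I@[i])" and len: "length I + 2 \<le> card V"
  shows "\<exists>l. adm_indices k mu (I@[i,l])"
proof (rule ccontr)
  assume na: "\<not> ?thesis"
  have ge: "mu l \<le> nu l (I@[i])" if "l \<in> {1..k}" for l
  proof (rule ccontr)
    assume "\<not> mu l \<le> nu l (I@[i])"
    then have lt: "nu l (I@[i]) + 1 \<le> mu l" by simp
    have "adm_indices k mu (I@[i,l])"
    proof -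
      have n: "\<forall>l'\<in>{1..k}. nu l' (I@[i,l]) \<le> mu l'"
      proof (intro ballI)
        fix l' assume that: "l' \<in> {1..k}"
        have "nu l' (I@[i,l]) = nu l' (I@[i]) + (if l = l' then 1 else 0)"
          by (simp add: nu_def)
        then show "nu l' (I@[i,l]) \<le> mu l'" using A lt that unfolding adm_indices_def by auto
      qed
      have s: "set (I@[i,l]) \<subseteq> {1..k}" using A \<open>l \<in> {1..k}\<close> unfolding adm_indices_def by simp
      show ?thesis using s n unfolding adm_indices_def by (rule conjI)
    qed
    then show False using na by blast
  qed
  have "card V = (\<Sum>l=1..k. mu l)" using M unfolding valid_mults_def by simp
  also have "\<dots> \<le> (\<Sum>l=1..k. nu l (I@[i]))" by (rule sum_mono) (use ge in auto)
  also have "\<dots> = length (I@[i])" using A unfolding adm_indices_def by (intro sum_nu) auto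
  finally show False using len by simp
qed

lemma adm_v:
  assumes "adm_vertices V (W@[u])" "v \<in> V - set (W@[u])"
  shows "adm_vertices V (W@[u,v])"
  using assms unfolding adm_vertices_def by auto

lemma exists_v:
  assumes fin: "finite V" and W: "adm_vertices V (W@[u])" and len: "length W + 2 \<le> card V"
  shows "V - set (W@[u]) \<noteq> {}"
proof
  assume "V - set (W@[u]) = {}"
  then have "V \<subseteq> set (W@[u])" by auto
  then have "card V \<le> card (set (W@[u]))" by (intro card_mono) auto
  also have "\<dots> = length W + 1" using W unfolding adm_vertices_def by (simp add: distinct_card)
  finally show False using len by simp
qed

lemma cangle_self: "A \<noteq> 0 \<Longrightarrow> cangle A A = 0"
  unfolding cangle_def by (simp add: power2_norm_eq_inner[symmetric] power2_eq_square)

lemma cangle_scale: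
  assumes "c1 > 0" "c2 > 0"
  shows "cangle (of_nat c1 * x) (of_nat c2 * y) = cangle x y"
proof -
  have "(of_nat c1 * x) \<bullet> (of_nat c2 * y) = real c1 * real c2 * (x \<bullet> y)"
    unfolding inner_complex_def by (simp add: algebra_simps)
  moreover have "cmod (of_nat c1 * x) * cmod (of_nat c2 * y) = real c1 * real c2 * (cmod x * cmod y)"
    by (simp add: norm_mult)
  ultimately show ?thesis unfolding cangle_def using assms by simp
qed

lemma ratio_bound:
  fixes a b :: complex
  assumes "a \<noteq> 0" "cmod (b / a - 1) \<le> \<epsilon>"
  shows "cmod (b - a) \<le> \<epsilon> * cmod a"
proof -
  have "b - a = (b / a - 1) * a" using assms(1) by (simp add: field_simps)
  then have "cmod (b - a) = cmod (b / a - 1) * cmod a" by (simp add: norm_mult)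
  then show ?thesis using assms(2) by (simp add: mult_right_mono)
qed


theorem proposition4p3:
  fixes V :: "'a set" and E :: "'a set set" and k :: nat and mu :: "nat \<Rightarrow> nat"
    and Z :: "'a set \<Rightarrow> nat set \<Rightarrow> complex"
    and W :: "'a list" and I :: "nat list" and \<epsilon> \<theta> :: real
  assumes G: "simple_graph V E"
    and M: "valid_mults V k mu"
    and W: "adm_vertices V W" and I: "adm_indices k mu I"
    and len: "length W = length I" "length W + 2 \<le> card V"
    and eps: "\<epsilon> > 0" and th: "0 \<le> \<theta>" "\<theta> < 2 * pi / 3" and epsth: "\<epsilon> < cos (\<theta> / 2)"
    and main: "\<And>u v i j. adm_vertices V (W @ [u, v]) \<Longrightarrow> adm_indices k mu (I @ [i, j]) \<Longrightarrow>
        Qpoly V E k mu Z (W @ [u, v]) (I @ [i, j]) \<noteq> 0 \<and>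
        Qpoly V E k mu Z (W @ [u, v]) (I @ [j, i]) \<noteq> 0 \<and>
        cmod (Qpoly V E k mu Z (W @ [u, v]) (I @ [i, j]) /
              Qpoly V E k mu Z (W @ [u, v]) (I @ [j, i]) - 1) \<le> \<epsilon>"
  shows
    "((\<forall>u v i j1 j2. adm_vertices V (W @ [u, v]) \<and> adm_indices k mu (I @ [i, j1])
          \<and> adm_indices k mu (I @ [i, j2]) \<longrightarrow>
          cangle (Qpoly V E k mu Z (W @ [u, v]) (I @ [i, j1]))
                 (Qpoly V E k mu Z (W @ [u, v]) (I @ [i, j2])) \<le> \<theta>)
      \<longrightarrow> (\<forall>u v i. adm_vertices V (W @ [u]) \<and> adm_vertices V (W @ [v])
          \<and> adm_indices k mu (I @ [i]) \<longrightarrow>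
          Qpoly V E k mu Z (W @ [u]) (I @ [i]) \<noteq> 0 \<and>
          Qpoly V E k mu Z (W @ [v]) (I @ [i]) \<noteq> 0 \<and>
          cangle (Qpoly V E k mu Z (W @ [u]) (I @ [i])) (Qpoly V E k mu Z (W @ [v]) (I @ [i]))
            \<le> arcsin (\<epsilon> / cos (\<theta> / 2))))
   \<and> ((\<forall>u v1 v2 i j. adm_vertices V (W @ [u, v1]) \<and> adm_vertices V (W @ [u, v2])
          \<and> adm_indices k mu (I @ [i, j]) \<longrightarrow>
          cangle (Qpoly V E k mu Z (W @ [u, v1]) (I @ [i, j]))
                 (Qpoly V E k mu Z (W @ [u, v2]) (I @ [i, j])) \<le> \<theta>)
      \<longrightarrow> (\<forall>u i j. adm_vertices V (W @ [u]) \<and> adm_indices k mu (I @ [i])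
          \<and> adm_indices k mu (I @ [j]) \<longrightarrow>
          Qpoly V E k mu Z (W @ [u]) (I @ [i]) \<noteq> 0 \<and>
          Qpoly V E k mu Z (W @ [u]) (I @ [j]) \<noteq> 0 \<and>
          cangle (Qpoly V E k mu Z (W @ [u]) (I @ [i])) (Qpoly V E k mu Z (W @ [u]) (I @ [j]))
            \<le> arcsin (\<epsilon> / cos (\<theta> / 2))))"
proof -
  have fin: "finite V" using G unfolding simple_graph_def by simp
  define Q where "Q = Qpoly V E k mu Z"
  define r where "r = arcsin (\<epsilon> / cos (\<theta> / 2))"
  have r0: "0 \<le> r" unfolding r_def using eps epsth by (intro arcsin_nonneg) auto
  have lenI: "length I + 2 \<le> card V" using len by simp
  have main': "Q (W@[u,v]) (I@[i,j]) \<noteq> 0 \<and>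
      cmod (Q (W@[u,v]) (I@[j,i]) - Q (W@[u,v]) (I@[i,j])) \<le> \<epsilon> * cmod (Q (W@[u,v]) (I@[i,j]))"
    if "adm_vertices V (W@[u,v])" "adm_indices k mu (I@[i,j])" for u v i j
  proof -
    have h1: "Q (W@[u,v]) (I@[i,j]) \<noteq> 0" using main[OF that] unfolding Q_def by blast
    have h2: "cmod (Q (W@[u,v]) (I@[j,i]) / Q (W@[u,v]) (I@[i,j]) - 1) \<le> \<epsilon>"
      using main[OF that(1), of j i] that(2) adm_swap unfolding Q_def by blast
    show ?thesis using h1 ratio_bound[OF h1 h2] by simp
  qed
  have vin: "set W' \<subseteq> V" if "adm_vertices V W'" for W' using that unfolding adm_vertices_def by simp
  have part1: "(\<forall>u v i j1 j2. adm_vertices V (W @ [u, v]) \<and> adm_indices k mu (I @ [i, j1])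
          \<and> adm_indices k mu (I @ [i, j2]) \<longrightarrow>
          cangle (Q (W @ [u, v]) (I @ [i, j1])) (Q (W @ [u, v]) (I @ [i, j2])) \<le> \<theta>)
      \<longrightarrow> (\<forall>u v i. adm_vertices V (W @ [u]) \<and> adm_vertices V (W @ [v])
          \<and> adm_indices k mu (I @ [i]) \<longrightarrow>
          Q (W @ [u]) (I @ [i]) \<noteq> 0 \<and> Q (W @ [v]) (I @ [i]) \<noteq> 0 \<and>
          cangle (Q (W @ [u]) (I @ [i])) (Q (W @ [v]) (I @ [i])) \<le> r)"
  proof (rule impI)
    assume H: "\<forall>u v i j1 j2. adm_vertices V (W @ [u, v]) \<and> adm_indices k mu (I @ [i, j1])
          \<and> adm_indices k mu (I @ [i, j2]) \<longrightarrow>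
          cangle (Q (W @ [u, v]) (I @ [i, j1])) (Q (W @ [u, v]) (I @ [i, j2])) \<le> \<theta>"
    have claim: "Q (W@[u]) (I@[i]) \<noteq> 0 \<and> Q (W@[v]) (I@[i]) \<noteq> 0 \<and>
        cangle (Q (W@[u]) (I@[i])) (Q (W@[v]) (I@[i])) \<le> r"
      if Wuv: "adm_vertices V (W@[u,v])" and Ii: "adm_indices k mu (I@[i])" for u v i
    proof -
      define J where "J = {j\<in>{1..k}. adm_indices k mu (I@[i,j])}"
      define a where "a j = Q (W@[u,v]) (I@[i,j])" for j
      define b where "b j = Q (W@[u,v]) (I@[j,i])" for j
      have uV: "u \<in> V" and vV: "v \<in> V" using vin[OF Wuv] by auto
      have Wvu: "adm_vertices V (W@[v,u])" using Wuv unfolding adm_vertices_def by auto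
      have lWu: "length (W@[u]) = length (I@[i])" using len by simp
      have lWv: "length (W@[v]) = length (I@[i])" using len by simp
      have l2: "length (W@[u,v]) = length (I@[j,l])" for j l using len by simp
      have A: "Q (W@[u]) (I@[i]) = sum a J"
      proof -
        have "Q (W@[u]) (I@[i]) = (\<Sum>j\<in>{1..k}. Q ((W@[u])@[v]) ((I@[i])@[j]))"
          unfolding Q_def by (rule Q_split[OF fin vV lWu])
        also have "\<dots> = (\<Sum>j\<in>{1..k}. a j)" by (simp add: a_def)
        also have "\<dots> = sum a J" unfolding J_def
          by (rule sum.mono_neutral_right) (auto simp: a_def Q_def intro!: Q_zero[OF fin Wuv l2])
        finally show ?thesis .
      qed
      have B: "Q (W@[v]) (I@[i]) = sum b J"
      proof -
        have "Q (W@[v]) (I@[i]) = (\<Sum>j\<in>{1..k}. Q ((W@[v])@[u]) ((I@[i])@[j]))"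
          unfolding Q_def by (rule Q_split[OF fin uV lWv])
        also have "\<dots> = (\<Sum>j\<in>{1..k}. b j)" unfolding b_def Q_def
          using Qpoly_swap[OF len(1)] by simp
        also have "\<dots> = sum b J" unfolding J_def
          by (rule sum.mono_neutral_right) (auto simp: b_def Q_def adm_swap intro!: Q_zero[OF fin Wuv l2])
        finally show ?thesis .
      qed
      obtain l where l: "adm_indices k mu (I@[i,l])" using adm_ext[OF M Ii lenI] by blast
      have "l \<in> J" using l unfolding J_def adm_indices_def by auto
      then have Jne: "J \<noteq> {}" by auto
      have c: "sum a J \<noteq> 0 \<and> sum b J \<noteq> 0 \<and> cangle (sum a J) (sum b J) \<le> r"
        unfolding r_def
      proof (rule core)
        show "finite J" unfolding J_def by simp
        show "J \<noteq> {}" by (rule Jne)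
        show "\<forall>j\<in>J. a j \<noteq> 0"
        proof
          fix j assume "j \<in> J" then have "adm_indices k mu (I@[i,j])" by (simp add: J_def)
          then show "a j \<noteq> 0" using main'[OF Wuv] unfolding a_def by blast
        qed
        show "\<forall>j\<in>J. cmod (b j - a j) \<le> \<epsilon> * cmod (a j)"
        proof
          fix j assume "j \<in> J" then have "adm_indices k mu (I@[i,j])" by (simp add: J_def)
          then show "cmod (b j - a j) \<le> \<epsilon> * cmod (a j)" using main'[OF Wuv] unfolding a_def b_def by blast
        qed
        show "\<forall>p\<in>J. \<forall>q\<in>J. cangle (a p) (a q) \<le> \<theta>"
        proof (intro ballI)
          fix p q assume "p \<in> J" "q \<in> J"
          then have "adm_indices k mu (I@[i,p])" "adm_indices k mu (I@[i,q])" by (simp_all add: J_def)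
          then show "cangle (a p) (a q) \<le> \<theta>" using H[rule_format, of u v i p q] Wuv unfolding a_def by blast
        qed
      qed (use th eps epsth in auto)
      then show ?thesis using A B by simp
    qed
    show "\<forall>u v i. adm_vertices V (W @ [u]) \<and> adm_vertices V (W @ [v])
          \<and> adm_indices k mu (I @ [i]) \<longrightarrow>
          Q (W @ [u]) (I @ [i]) \<noteq> 0 \<and> Q (W @ [v]) (I @ [i]) \<noteq> 0 \<and>
          cangle (Q (W @ [u]) (I @ [i])) (Q (W @ [v]) (I @ [i])) \<le> r"
    proof (intro allI impI, elim conjE)
      fix u v i assume Wu: "adm_vertices V (W @ [u])" and Wv: "adm_vertices V (W @ [v])"
        and Ii: "adm_indices k mu (I @ [i])"
      show "Q (W @ [u]) (I @ [i]) \<noteq> 0 \<and> Q (W @ [v]) (I @ [i]) \<noteq> 0 \<and>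
          cangle (Q (W @ [u]) (I @ [i])) (Q (W @ [v]) (I @ [i])) \<le> r"
      proof (cases "u = v")
        case True
        obtain v' where v': "v' \<in> V - set (W@[u])" using exists_v[OF fin Wu len(2)] by blast
        have "Q (W@[u]) (I@[i]) \<noteq> 0" using claim[OF adm_v[OF Wu v'] Ii] by blast
        then show ?thesis using True cangle_self r0 by simp
      next
        case False
        have "v \<in> V - set (W@[u])" using Wv False unfolding adm_vertices_def by auto
        then show ?thesis using claim[OF adm_v[OF Wu] Ii] by blast
      qed
    qed
  qed
  have part2: "(\<forall>u v1 v2 i j. adm_vertices V (W @ [u, v1]) \<and> adm_vertices V (W @ [u, v2])
          \<and> adm_indices k mu (I @ [i, j]) \<longrightarrow>
          cangle (Q (W @ [u, v1]) (I @ [i, j])) (Q (W @ [u, v2]) (I @ [i, j])) \<le> \<theta>)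
      \<longrightarrow> (\<forall>u i j. adm_vertices V (W @ [u]) \<and> adm_indices k mu (I @ [i])
          \<and> adm_indices k mu (I @ [j]) \<longrightarrow>
          Q (W @ [u]) (I @ [i]) \<noteq> 0 \<and> Q (W @ [u]) (I @ [j]) \<noteq> 0 \<and>
          cangle (Q (W @ [u]) (I @ [i])) (Q (W @ [u]) (I @ [j])) \<le> r)"
  proof (rule impI)
    assume H: "\<forall>u v1 v2 i j. adm_vertices V (W @ [u, v1]) \<and> adm_vertices V (W @ [u, v2])
          \<and> adm_indices k mu (I @ [i, j]) \<longrightarrow>
          cangle (Q (W @ [u, v1]) (I @ [i, j])) (Q (W @ [u, v2]) (I @ [i, j])) \<le> \<theta>"
    have claim: "Q (W@[u]) (I@[i]) \<noteq> 0 \<and> Q (W@[u]) (I@[j]) \<noteq> 0 \<and>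
        cangle (Q (W@[u]) (I@[i])) (Q (W@[u]) (I@[j])) \<le> r"
      if Wu: "adm_vertices V (W@[u])" and Iij: "adm_indices k mu (I@[i,j])" for u i j
    proof -
      define R where "R = V - set (W@[u])"
      define a where "a v = Q (W@[u,v]) (I@[i,j])" for v
      define b where "b v = Q (W@[u,v]) (I@[j,i])" for v
      have Iji: "adm_indices k mu (I@[j,i])" using Iij adm_swap by blast
      have ij: "i \<in> {1..k}" "j \<in> {1..k}" using Iij unfolding adm_indices_def by auto
      have lWu: "length (W@[u]) = length (I@[i])" "length (W@[u]) = length (I@[j])" using len by simp_all
      define c1 where "c1 = mu j - nu j (I@[i])"
      define c2 where "c2 = mu i - nu i (I@[j])"
      have c1: "c1 > 0"
      proof -
        have "nu j (I@[i,j]) \<le> mu j" using Iij ij unfolding adm_indices_def by blast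
        moreover have "nu j (I@[i,j]) = nu j (I@[i]) + 1" by (simp add: nu_def)
        ultimately show ?thesis unfolding c1_def by simp
      qed
      have c2: "c2 > 0"
      proof -
        have "nu i (I@[j,i]) \<le> mu i" using Iji ij unfolding adm_indices_def by blast
        moreover have "nu i (I@[j,i]) = nu i (I@[j]) + 1" by (simp add: nu_def)
        ultimately show ?thesis unfolding c2_def by simp
      qed
      have A: "sum a R = of_nat c1 * Q (W@[u]) (I@[i])"
        using Q_count[OF fin Wu lWu(1) ij(2), where E=E and Z=Z] unfolding a_def R_def c1_def Q_def by simp
      have B: "sum b R = of_nat c2 * Q (W@[u]) (I@[j])"
        using Q_count[OF fin Wu lWu(2) ij(1), where E=E and Z=Z] unfolding b_def R_def c2_def Q_def by simp
      have Wuv: "adm_vertices V (W@[u,v])" if "v \<in> R" for v using adm_v[OF Wu] that unfolding R_def by blast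
      have c: "sum a R \<noteq> 0 \<and> sum b R \<noteq> 0 \<and> cangle (sum a R) (sum b R) \<le> r"
        unfolding r_def
      proof (rule core)
        show "finite R" unfolding R_def using fin by simp
        show "R \<noteq> {}" unfolding R_def by (rule exists_v[OF fin Wu len(2)])
        show "\<forall>v\<in>R. a v \<noteq> 0"
        proof
          fix v assume "v \<in> R"
          then show "a v \<noteq> 0" using main'[OF Wuv Iij] unfolding a_def by blast
        qed
        show "\<forall>v\<in>R. cmod (b v - a v) \<le> \<epsilon> * cmod (a v)"
        proof
          fix v assume "v \<in> R"
          then show "cmod (b v - a v) \<le> \<epsilon> * cmod (a v)" using main'[OF Wuv Iij] unfolding a_def b_def by blast
        qed
        show "\<forall>p\<in>R. \<forall>q\<in>R. cangle (a p) (a q) \<le> \<theta>"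
        proof (intro ballI)
          fix p q assume "p \<in> R" "q \<in> R"
          then have "adm_vertices V (W@[u,p])" "adm_vertices V (W@[u,q])" using Wuv by blast+
          then show "cangle (a p) (a q) \<le> \<theta>" using H[rule_format, of u p q i j] Iij unfolding a_def by blast
        qed
      qed (use th eps epsth in auto)
      then show ?thesis using A B cangle_scale[OF c1 c2] by auto
    qed
    show "\<forall>u i j. adm_vertices V (W @ [u]) \<and> adm_indices k mu (I @ [i])
          \<and> adm_indices k mu (I @ [j]) \<longrightarrow>
          Q (W @ [u]) (I @ [i]) \<noteq> 0 \<and> Q (W @ [u]) (I @ [j]) \<noteq> 0 \<and>
          cangle (Q (W @ [u]) (I @ [i])) (Q (W @ [u]) (I @ [j])) \<le> r"
    proof (intro allI impI, elim conjE)
      fix u i j assume Wu: "adm_vertices V (W @ [u])" and Ii: "adm_indices k mu (I @ [i])"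
        and Ij: "adm_indices k mu (I @ [j])"
      show "Q (W @ [u]) (I @ [i]) \<noteq> 0 \<and> Q (W @ [u]) (I @ [j]) \<noteq> 0 \<and>
          cangle (Q (W @ [u]) (I @ [i])) (Q (W @ [u]) (I @ [j])) \<le> r"
      proof (cases "i = j")
        case True
        obtain l where l: "adm_indices k mu (I@[i,l])" using adm_ext[OF M Ii lenI] by blast
        have "Q (W@[u]) (I@[i]) \<noteq> 0" using claim[OF Wu l] by blast
        then show ?thesis using True cangle_self r0 by simp
      next
        case False
        then show ?thesis using claim[OF Wu adm_pair[OF False Ii Ij]] by blast
      qed
    qed
  qed
  show ?thesis using part1 part2 unfolding Q_def r_def by (rule conjI)
qed

end
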